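(* Let $G$ be a 3-symmetric graph on 16 vertices. Then the clique number $\omega(G)$ satisfies $3\le \omega(G)\le 8$, and the maximum degree of $G$ is at least $8$.
   Context: All graphs are finite and simple. For a graph $G$ on $n$ vertices and a graph $F$ on $k$ vertices, the density $t(F,G)$ is the number of $k$-element subsets $S\subseteq V(G)$ whose induced subgraph is isomorphic to $F$, divided by $\binom{n}{k}$. A graph $G$ with at least 3 vertices is 3-symmetric if $t(K_3,G)=1/8$, $t(P_3,G)=3/8$, $t(K_2\cup K_1,G)=3/8$ and $t(\overline{K_3},G)=1/8$, where $K_3$ is the triangle, $P_3$ the path with 3 vertices and 2 edges, $K_2\cup K_1$ the 3-vertex graph with exactly one edge, and $\overline{K_3}$ the 3-vertex graph with no edges. *)

theory Defs
  imports Complex_Main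
begin

definition simple_graph :: "'a set \<Rightarrow> ('a \<Rightarrow> 'a \<Rightarrow> bool) \<Rightarrow> bool" where
  "simple_graph V E \<longleftrightarrow> finite V \<and> (\<forall>x\<in>V. \<forall>y\<in>V. E x y \<longleftrightarrow> E y x) \<and> (\<forall>x\<in>V. \<not> E x x)"

definition induced_iso :: "'a set \<Rightarrow> ('a \<Rightarrow> 'a \<Rightarrow> bool) \<Rightarrow> 'b set \<Rightarrow> ('b \<Rightarrow> 'b \<Rightarrow> bool) \<Rightarrow> bool" where
  "induced_iso S E W F \<longleftrightarrow>
     (\<exists>f. bij_betw f S W \<and> (\<forall>x\<in>S. \<forall>y\<in>S. E x y \<longleftrightarrow> F (f x) (f y)))"

definition density :: "'b set \<Rightarrow> ('b \<Rightarrow> 'b \<Rightarrow> bool) \<Rightarrow> 'a set \<Rightarrow> ('a \<Rightarrow> 'a \<Rightarrow> bool) \<Rightarrow> real" where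
  "density W F V E =
     real (card {S. S \<subseteq> V \<and> card S = card W \<and> induced_iso S E W F}) / real (card V choose card W)"

definition tri_V :: "nat set" where "tri_V = {0,1,2}"

definition K3_E :: "nat \<Rightarrow> nat \<Rightarrow> bool" where "K3_E x y \<longleftrightarrow> x \<noteq> y"
definition P3_E :: "nat \<Rightarrow> nat \<Rightarrow> bool" where
  "P3_E x y \<longleftrightarrow> {x,y} = {0,1} \<or> {x,y} = {1,2}"
definition K2K1_E :: "nat \<Rightarrow> nat \<Rightarrow> bool" where
  "K2K1_E x y \<longleftrightarrow> {x,y} = {0,1}"
definition empty3_E :: "nat \<Rightarrow> nat \<Rightarrow> bool" where "empty3_E x y \<longleftrightarrow> False"

definition three_symmetric :: "'a set \<Rightarrow> ('a \<Rightarrow> 'a \<Rightarrow> bool) \<Rightarrow> bool" where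
  "three_symmetric V E \<longleftrightarrow> card V \<ge> 3 \<and>
     density tri_V K3_E V E = 1/8 \<and> density tri_V P3_E V E = 3/8 \<and>
     density tri_V K2K1_E V E = 3/8 \<and> density tri_V empty3_E V E = 1/8"

definition is_clique :: "'a set \<Rightarrow> ('a \<Rightarrow> 'a \<Rightarrow> bool) \<Rightarrow> 'a set \<Rightarrow> bool" where
  "is_clique V E C \<longleftrightarrow> C \<subseteq> V \<and> (\<forall>x\<in>C. \<forall>y\<in>C. x \<noteq> y \<longrightarrow> E x y)"

definition clique_number :: "'a set \<Rightarrow> ('a \<Rightarrow> 'a \<Rightarrow> bool) \<Rightarrow> nat" where
  "clique_number V E = Max (card ` {C. is_clique V E C})"

definition degree :: "'a set \<Rightarrow> ('a \<Rightarrow> 'a \<Rightarrow> bool) \<Rightarrow> 'a \<Rightarrow> nat" where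
  "degree V E v = card {u\<in>V. E v u}"

definition max_degree :: "'a set \<Rightarrow> ('a \<Rightarrow> 'a \<Rightarrow> bool) \<Rightarrow> nat" where
  "max_degree V E = Max (degree V E ` V)"

end

theory Submission imports Defs begin

lemma iso_pairs:
  assumes "induced_iso S E W F"
  shows "card {(x,y). x\<in>S \<and> y\<in>S \<and> E x y} = card {(a,b). a\<in>W \<and> b\<in>W \<and> F a b}"
proof -
  obtain f where bf: "bij_betw f S W" and hf: "\<forall>x\<in>S. \<forall>y\<in>S. E x y \<longleftrightarrow> F (f x) (f y)"
    using assms unfolding induced_iso_def by blast
  have "bij_betw (map_prod f f) {(x,y). x\<in>S \<and> y\<in>S \<and> E x y} {(a,b). a\<in>W \<and> b\<in>W \<and> F a b}"
    unfolding bij_betw_def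
  proof
    show "inj_on (map_prod f f) {(x, y). x \<in> S \<and> y \<in> S \<and> E x y}"
      using bf unfolding bij_betw_def inj_on_def by auto
    show "map_prod f f ` {(x, y). x \<in> S \<and> y \<in> S \<and> E x y} = {(a, b). a \<in> W \<and> b \<in> W \<and> F a b}"
    proof
      show "map_prod f f ` {(x, y). x \<in> S \<and> y \<in> S \<and> E x y} \<subseteq> {(a, b). a \<in> W \<and> b \<in> W \<and> F a b}"
        using bf hf unfolding bij_betw_def by auto
      show "{(a, b). a \<in> W \<and> b \<in> W \<and> F a b} \<subseteq> map_prod f f ` {(x, y). x \<in> S \<and> y \<in> S \<and> E x y}"
      proof clarify
        fix a b assume ab: "a \<in> W" "b \<in> W" "F a b"
        then obtain x y where "x \<in> S" "y \<in> S" "a = f x" "b = f y"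
          using bf unfolding bij_betw_def by blast
        then show "(a,b) \<in> map_prod f f ` {(x, y). x \<in> S \<and> y \<in> S \<and> E x y}"
          using hf ab by (auto intro!: image_eqI[of _ _ "(x,y)"])
      qed
    qed
  qed
  then show ?thesis by (rule bij_betw_same_card)
qed

lemma K3_pairs: "card {(a,b). a\<in>tri_V \<and> b\<in>tri_V \<and> K3_E a b} = 6"
proof -
  have "{(a,b). a\<in>tri_V \<and> b\<in>tri_V \<and> K3_E a b} = {(0,1),(0,2),(1,0),(1,2),(2,0),(2,1)}"
    by (auto simp: tri_V_def K3_E_def)
  then show ?thesis by simp
qed

lemma P3_pairs: "card {(a,b). a\<in>tri_V \<and> b\<in>tri_V \<and> P3_E a b} = 4"
proof -
  have "{(a,b). a\<in>tri_V \<and> b\<in>tri_V \<and> P3_E a b} = {(0,1),(1,0),(1,2),(2,1)}"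
    by (auto simp: tri_V_def P3_E_def doubleton_eq_iff)
  then show ?thesis by simp
qed

lemma K2K1_pairs: "card {(a,b). a\<in>tri_V \<and> b\<in>tri_V \<and> K2K1_E a b} = 2"
proof -
  have "{(a,b). a\<in>tri_V \<and> b\<in>tri_V \<and> K2K1_E a b} = {(0,1),(1,0)}"
    by (auto simp: tri_V_def K2K1_E_def doubleton_eq_iff)
  then show ?thesis by simp
qed

lemma c16: "(16::nat) choose 3 = 560" by (simp add: numeral_eq_Suc)

lemma triples_containing:
  assumes fin: "finite V" and x: "x \<in> V" and y: "y \<in> V" and xy: "x \<noteq> y"
  shows "card {S. S \<subseteq> V \<and> card S = 3 \<and> x \<in> S \<and> y \<in> S} = card V - 2"
proof -
  have eq: "{S. S \<subseteq> V \<and> card S = 3 \<and> x \<in> S \<and> y \<in> S} = (\<lambda>z. {x,y,z}) ` (V - {x,y})"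
  proof
    show "(\<lambda>z. {x,y,z}) ` (V - {x,y}) \<subseteq> {S. S \<subseteq> V \<and> card S = 3 \<and> x \<in> S \<and> y \<in> S}"
      using x y xy by auto
    show "{S. S \<subseteq> V \<and> card S = 3 \<and> x \<in> S \<and> y \<in> S} \<subseteq> (\<lambda>z. {x,y,z}) ` (V - {x,y})"
    proof clarify
      fix S assume S: "S \<subseteq> V" "card S = 3" "x \<in> S" "y \<in> S"
      have fS: "finite S" using S fin finite_subset by blast
      have "card (S - {x,y}) = 1" using S xy fS by (simp add: card_Diff_subset)
      then obtain z where z: "S - {x,y} = {z}" by (auto simp: card_Suc_eq)
      have "S = {x,y,z}" using z S by blast
      moreover have "z \<in> V - {x,y}" using z S by blast
      ultimately show "S \<in> (\<lambda>z. {x,y,z}) ` (V - {x,y})" by blast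
    qed
  qed
  have inj: "inj_on (\<lambda>z. {x,y,z}) (V - {x,y})"
    unfolding inj_on_def by auto
  show ?thesis unfolding eq card_image[OF inj] using x y xy fin by (simp add: card_Diff_subset)
qed

theorem mainTheorem19:
  fixes V :: "'a set" and E :: "'a \<Rightarrow> 'a \<Rightarrow> bool"
  assumes "simple_graph V E"
    and "card V = 16"
    and "three_symmetric V E"
  shows "3 \<le> clique_number V E \<and> clique_number V E \<le> 8 \<and> max_degree V E \<ge> 8"
proof -
  have fin: "finite V" and sym: "\<forall>x\<in>V. \<forall>y\<in>V. E x y \<longleftrightarrow> E y x" and irr: "\<forall>x\<in>V. \<not> E x x"
    using assms(1) unfolding simple_graph_def by auto
  have ct: "card tri_V = 3" by (simp add: tri_V_def)
  define A3 where "A3 = {S. S \<subseteq> V \<and> card S = 3 \<and> induced_iso S E tri_V K3_E}"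
  define AP where "AP = {S. S \<subseteq> V \<and> card S = 3 \<and> induced_iso S E tri_V P3_E}"
  define AK where "AK = {S. S \<subseteq> V \<and> card S = 3 \<and> induced_iso S E tri_V K2K1_E}"
  have "real (card A3) / 560 = 1/8" "real (card AP) / 560 = 3/8" "real (card AK) / 560 = 3/8"
    using assms(3) unfolding three_symmetric_def density_def A3_def AP_def AK_def ct assms(2) c16
    by auto
  then have cA3: "card A3 = 70" and cAP: "card AP = 210" and cAK: "card AK = 210" by auto
  define T where "T = {S. S \<subseteq> V \<and> card S = 3}"
  have finT: "finite T" unfolding T_def using fin by simp
  have K3clique: "is_clique V E S" if "S \<in> A3" for S
  proof -
    from that obtain f where S: "S \<subseteq> V" and bf: "bij_betw f S tri_V" and hf: "\<forall>x\<in>S. \<forall>y\<in>S. E x y \<longleftrightarrow> K3_E (f x) (f y)"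
      unfolding A3_def induced_iso_def by blast
    show ?thesis unfolding is_clique_def using S hf bf
      by (auto simp: K3_E_def bij_betw_def inj_on_def)
  qed
  
  have finC: "finite (card ` {C. is_clique V E C})"
  proof (rule finite_subset)
    show "card ` {C. is_clique V E C} \<subseteq> {0..16}"
      using fin assms(2) by (auto simp: is_clique_def dest: card_mono[OF fin])
  qed simp
  
  have "A3 \<noteq> {}" using cA3 by auto
  then obtain S where "S \<in> A3" by blast
  then have "is_clique V E S" "card S = 3" using K3clique A3_def by auto
  then have lb: "3 \<le> clique_number V E" unfolding clique_number_def
    using finC by (metis (mono_tags) Max_ge image_eqI mem_Collect_eq)
  
  have small: "card C \<le> 8" if C: "is_clique V E C" for C
  proof (rule ccontr)
    assume "\<not> card C \<le> 8"
    then have "9 \<le> card C" by simp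
    then obtain D where D: "D \<subseteq> C" "card D = 9" "finite D" by (rule obtain_subset_with_card_n)
    have "{B. B \<subseteq> D \<and> card B = 3} \<subseteq> A3"
    proof
      fix B assume "B \<in> {B. B \<subseteq> D \<and> card B = 3}"
      then have B: "B \<subseteq> D" "card B = 3" by auto
      have fB: "finite B" using B D finite_subset by blast
      obtain f where bf: "bij_betw f B tri_V" using finite_same_card_bij[OF fB] B ct
        by (metis finite.emptyI finite.insertI tri_V_def)
      have "\<forall>x\<in>B. \<forall>y\<in>B. E x y \<longleftrightarrow> K3_E (f x) (f y)"
      proof (intro ballI)
        fix x y assume xy: "x \<in> B" "y \<in> B"
        have inj: "f x = f y \<longleftrightarrow> x = y" using bf xy unfolding bij_betw_def inj_on_def by blast
        have "x \<in> V" "x \<in> C" "y \<in> C" using xy B D C unfolding is_clique_def by auto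
        then show "E x y \<longleftrightarrow> K3_E (f x) (f y)" using C irr inj unfolding K3_E_def is_clique_def by auto
      qed
      then show "B \<in> A3" unfolding A3_def induced_iso_def using bf B D C
        by (auto simp: is_clique_def)
    qed
    moreover have "finite A3" by (rule finite_subset[OF _ finT]) (auto simp: A3_def T_def)
    ultimately have "card {B. B \<subseteq> D \<and> card B = 3} \<le> 70" using cA3 card_mono by metis
    moreover have "card {B. B \<subseteq> D \<and> card B = 3} = 84" using n_subsets[OF D(3)] D(2)
      by (simp add: numeral_eq_Suc)
    ultimately show False by simp
  qed
  have ub: "clique_number V E \<le> 8" unfolding clique_number_def
    using finC small \<open>is_clique V E S\<close> by (subst Max_le_iff) auto
  
  define P where "P = {(x,y). x\<in>V \<and> y\<in>V \<and> E x y}"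
  define g where "g S = card {(x,y). x\<in>S \<and> y\<in>S \<and> E x y}" for S
  have finP: "finite P"
    by (rule finite_subset[of _ "V \<times> V"]) (auto simp: P_def fin)
  have gsum: "g S = (\<Sum>p\<in>P. of_bool (fst p \<in> S \<and> snd p \<in> S))" if "S \<in> T" for S
  proof -
    have "P \<inter> {p. fst p \<in> S \<and> snd p \<in> S} = {(x,y). x\<in>S \<and> y\<in>S \<and> E x y}"
      using that unfolding T_def P_def by auto
    then show ?thesis unfolding g_def using finP by simp
  qed
  have "(\<Sum>S\<in>T. g S) = (\<Sum>S\<in>T. \<Sum>p\<in>P. of_bool (fst p \<in> S \<and> snd p \<in> S))"
    using gsum by (rule sum.cong[OF refl])
  also have "\<dots> = (\<Sum>p\<in>P. \<Sum>S\<in>T. of_bool (fst p \<in> S \<and> snd p \<in> S))"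
    by (rule sum.swap)
  also have "\<dots> = (\<Sum>p\<in>P. 14)"
  proof (rule sum.cong[OF refl])
    fix p assume "p \<in> P"
    then obtain x y where p: "p = (x,y)" "x \<in> V" "y \<in> V" "E x y" unfolding P_def by auto
    then have "x \<noteq> y" using irr by auto
    have "T \<inter> {S. fst p \<in> S \<and> snd p \<in> S} = {S. S \<subseteq> V \<and> card S = 3 \<and> x \<in> S \<and> y \<in> S}"
      unfolding T_def p by auto
    then show "(\<Sum>S\<in>T. of_bool (fst p \<in> S \<and> snd p \<in> S)) = (14::nat)"
      using finT triples_containing[OF fin p(2,3) \<open>x \<noteq> y\<close>] assms(2) by simp
  qed
  also have "\<dots> = 14 * card P" by simp
  finally have sumT: "(\<Sum>S\<in>T. g S) = 14 * card P" .
  have gA3: "g S = 6" if "S \<in> A3" for S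
    using that iso_pairs[of S E tri_V K3_E] K3_pairs unfolding A3_def g_def by auto
  have gAP: "g S = 4" if "S \<in> AP" for S
    using that iso_pairs[of S E tri_V P3_E] P3_pairs unfolding AP_def g_def by auto
  have gAK: "g S = 2" if "S \<in> AK" for S
    using that iso_pairs[of S E tri_V K2K1_E] K2K1_pairs unfolding AK_def g_def by auto
  have sub: "A3 \<union> AP \<union> AK \<subseteq> T" unfolding T_def A3_def AP_def AK_def by auto
  have fA3: "finite A3" and fAP: "finite AP" and fAK: "finite AK"
    using sub finT finite_subset by blast+
  have d1: "A3 \<inter> AP = {}" using gA3 gAP by fastforce
  have d2: "(A3 \<union> AP) \<inter> AK = {}" using gA3 gAP gAK by fastforce
  have "(\<Sum>S\<in>A3 \<union> AP \<union> AK. g S) = (\<Sum>S\<in>A3. g S) + (\<Sum>S\<in>AP. g S) + (\<Sum>S\<in>AK. g S)"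
    using fA3 fAP fAK d1 d2 by (simp add: sum.union_disjoint)
  also have "\<dots> = 1680" using gA3 gAP gAK cA3 cAP cAK by simp
  finally have "(\<Sum>S\<in>A3 \<union> AP \<union> AK. g S) = 1680" .
  moreover have "(\<Sum>S\<in>A3 \<union> AP \<union> AK. g S) \<le> (\<Sum>S\<in>T. g S)"
    using sub finT by (intro sum_mono2) auto
  ultimately have P120: "120 \<le> card P" using sumT by simp
  have cardP: "card P = (\<Sum>x\<in>V. degree V E x)"
  proof -
    have "P = Sigma V (\<lambda>x. {u\<in>V. E x u})" unfolding P_def by auto
    then show ?thesis unfolding degree_def using fin by (simp add: card_SigmaI)
  qed
  have Vne: "V \<noteq> {}" using assms(2) by auto
  show ?thesis
  proof (intro conjI lb ub)
    show "8 \<le> max_degree V E"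
    proof (rule ccontr)
    assume "\<not> 8 \<le> max_degree V E"
    then have lt: "Max (degree V E ` V) < 8" unfolding max_degree_def by simp
    have "\<forall>x\<in>V. degree V E x \<le> 7"
    proof
      fix x assume "x \<in> V"
      then have "degree V E x \<le> Max (degree V E ` V)" using fin by simp
      then show "degree V E x \<le> 7" using lt by linarith
    qed
    then have "(\<Sum>x\<in>V. degree V E x) \<le> (\<Sum>x\<in>V. 7)" by (intro sum_mono) blast
    also have "\<dots> = 112" using assms(2) by simp
    finally show False using cardP P120 by linarith
  qed
  qed
qed

end
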